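(* Let $\rho>\chi>1$. There exists a $\rho$-robust $\chi$-consistent (randomized) online bidding strategy if and only if there exists a $(\rho,\chi)$-bidding profile.
   Context: Online bidding: unknown target $T>0$, prediction normalized to $1$. A deterministic strategy is a bi-infinite sequence $0<\cdots<b_{-1}<b_0<b_1<\cdots$; its cost on $T$ is $\sum_{n\le n_*}b_n$ with $n_*=\min\{n:b_n\ge T\}$. A randomized strategy $B$ is a probability distribution over deterministic strategies with expected cost $\mathrm{cost}_B(T)$; it is $\chi$-consistent if $\mathrm{cost}_B(1)\le\chi$ and $\rho$-robust if $\mathrm{cost}_B(T)\le\rho T$ for all $T>0$. Given $1<\chi\le\rho$, a $(\rho,\chi)$-bidding profile is a non-decreasing, left-continuous $G:\mathbb{R}\to(0,\infty)$ with (offset) $G(x)<1$ for $x<0$ and $G(x)\ge1$ for $x>0$; (robustness) $\int_{-\infty}^{x+1}G(t)\,\mathrm{d} t\le\rho G(x)$ for all $x\in\mathbb{R}$; (consistency) $\int_{-\infty}^1 G(t)\,\mathrm{d} t\le\chi$. *)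

theory Defs
  imports "HOL-Probability.Probability"
begin

text \<open>A deterministic bidding strategy: a bi-infinite, strictly increasing sequence of
  positive bids indexed by the integers, such that for every target T > 0 the index
  n_* = min {n. b n >= T} exists (needed for the cost to be defined).\<close>
definition det_strategy :: "(int \<Rightarrow> real) \<Rightarrow> bool" where
  "det_strategy b \<longleftrightarrow> (\<forall>n. 0 < b n) \<and> strict_mono b \<and>
     (\<forall>T>0. \<exists>n. T \<le> b n \<and> (\<forall>m<n. b m < T))"

definition nstar :: "(int \<Rightarrow> real) \<Rightarrow> real \<Rightarrow> int" where
  "nstar b T = (THE n. T \<le> b n \<and> (\<forall>m<n. b m < T))"

definition det_cost :: "(int \<Rightarrow> real) \<Rightarrow> real \<Rightarrow> ennreal" where
  "det_cost b T = (\<integral>\<^sup>+ n. ennreal (b n) * indicator {..nstar b T} n \<partial>count_space UNIV)"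

definition rand_strategy :: "(int \<Rightarrow> real) measure \<Rightarrow> bool" where
  "rand_strategy B \<longleftrightarrow> prob_space B \<and>
     sets B = sets (Pi\<^sub>M UNIV (\<lambda>_. borel)) \<and> (AE b in B. det_strategy b)"

definition rand_cost :: "(int \<Rightarrow> real) measure \<Rightarrow> real \<Rightarrow> ennreal" where
  "rand_cost B T = (\<integral>\<^sup>+ b. det_cost b T \<partial>B)"

definition consistent :: "real \<Rightarrow> (int \<Rightarrow> real) measure \<Rightarrow> bool" where
  "consistent chi B \<longleftrightarrow> rand_cost B 1 \<le> ennreal chi"

definition robust :: "real \<Rightarrow> (int \<Rightarrow> real) measure \<Rightarrow> bool" where
  "robust rho B \<longleftrightarrow> (\<forall>T>0. rand_cost B T \<le> ennreal (rho * T))"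

definition bidding_profile :: "real \<Rightarrow> real \<Rightarrow> (real \<Rightarrow> real) \<Rightarrow> bool" where
  "bidding_profile rho chi G \<longleftrightarrow>
     mono G \<and> (\<forall>x. continuous (at_left x) G) \<and> (\<forall>x. 0 < G x) \<and>
     (\<forall>x<0. G x < 1) \<and> (\<forall>x>0. 1 \<le> G x) \<and>
     (\<forall>x. (\<integral>\<^sup>+ t\<in>{..x+1}. ennreal (G t) \<partial>lborel) \<le> ennreal (rho * G x)) \<and>
     (\<integral>\<^sup>+ t\<in>{..1}. ennreal (G t) \<partial>lborel) \<le> ennreal chi"

end

theory Submission
  imports Defs
begin

lemma cs_int_suminf: "(\<integral>\<^sup>+n. f n \<partial>count_space (UNIV::int set)) = (\<Sum>k. f (int_decode k))"
proof -
  have "(\<integral>\<^sup>+n. f n \<partial>count_space (UNIV::int set)) = (\<integral>\<^sup>+k. f (int_decode k) \<partial>count_space UNIV)"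
    using nn_integral_bij_count_space[OF bij_int_decode, of f] by simp
  also have "\<dots> = (\<Sum>k. f (int_decode k))" by (rule nn_integral_count_space_nat)
  finally show ?thesis .
qed

lemma meas_cs[measurable]:
  assumes "\<And>n. f n \<in> borel_measurable M"
  shows "(\<lambda>x. \<integral>\<^sup>+n. f n x \<partial>count_space (UNIV::int set)) \<in> borel_measurable M"
  unfolding cs_int_suminf using assms by measurable

lemma cs_ind: "(\<integral>\<^sup>+n. (if P n then 1 else 0) \<partial>count_space UNIV) = emeasure (count_space UNIV) {n. P n}"
proof -
  have "(\<integral>\<^sup>+n. (if P n then 1 else 0) \<partial>count_space UNIV) = (\<integral>\<^sup>+n. indicator {n. P n} n \<partial>count_space UNIV)"
    by (intro nn_integral_cong) (simp add: indicator_def)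
  then show ?thesis by simp
qed

lemma cs_single: "(\<integral>\<^sup>+n. indicator {N} n \<partial>count_space (UNIV::int set)) = 1"
  by simp

definition good :: "(int \<Rightarrow> real) \<Rightarrow> bool" where
  "good b \<longleftrightarrow> (\<forall>n. 0 < b n) \<and> mono b \<and> (\<forall>T>0. (\<exists>n. T \<le> b n) \<and> (\<exists>n. b n < T))"

definition cnt :: "(int \<Rightarrow> real) \<Rightarrow> real \<Rightarrow> real \<Rightarrow> ennreal" where
  "cnt b s t = (\<integral>\<^sup>+n. (if s \<le> b n \<and> b n < t \<and> b (n-1) < b n then 1 else 0) \<partial>count_space UNIV)"

definition dc :: "(int \<Rightarrow> real) \<Rightarrow> real \<Rightarrow> ennreal" where
  "dc b T = (\<integral>\<^sup>+n. (if b (n-1) < b n \<and> b (n-1) < T then ennreal (b n) else 0) \<partial>count_space UNIV)"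

definition cr :: "(int \<Rightarrow> real) \<Rightarrow> real \<Rightarrow> real \<Rightarrow> ennreal" where
  "cr b T r = (\<integral>\<^sup>+n. (if r < b n \<and> b (n-1) < b n \<and> b (n-1) < T then 1 else 0) \<partial>count_space UNIV)"

lemma good_first:
  assumes "good b" "0 < T"
  obtains N where "T \<le> b N" "\<And>n. n < N \<Longrightarrow> b n < T" "\<And>n. N \<le> n \<Longrightarrow> T \<le> b n"
proof -
  from assms obtain m j where m: "b m < T" and j: "T \<le> b j" unfolding good_def by blast
  have mono: "mono b" using assms(1) good_def by auto
  have "m < j"
  proof (rule ccontr)
    assume "\<not> m < j"
    then have "b j \<le> b m" using mono by (simp add: monoD)
    then show False using m j by simp
  qed
  then have ex: "\<exists>k::nat. T \<le> b (m + int k)"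
    by (intro exI[of _ "nat (j - m)"]) (simp add: j)
  define k where "k = (LEAST k::nat. T \<le> b (m + int k))"
  have k: "T \<le> b (m + int k)" using LeastI_ex[OF ex] k_def by simp
  have kmin: "\<And>k'. k' < k \<Longrightarrow> b (m + int k') < T" using not_less_Least k_def by (metis not_le)
  show ?thesis
  proof (rule that[of "m + int k"])
    show "T \<le> b (m + int k)" by (rule k)
  next
    fix n assume n: "n < m + int k"
    show "b n < T"
    proof (cases "n \<le> m")
      case True then show ?thesis using mono m monoD by (metis le_less_trans)
    next
      case False
      then have "n = m + int (nat (n - m))" "nat (n-m) < k" using n by auto
      then show ?thesis using kmin by metis
    qed
  next
    fix n assume "m + int k \<le> n" then show "T \<le> b n" using k mono monoD order_trans by metis
  qed
qed

lemma mono_step: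
  assumes "mono (b::int\<Rightarrow>real)" "i < j" "b i < b j"
  shows "\<exists>n. i < n \<and> n \<le> j \<and> b (n-1) < b n"
proof (rule ccontr)
  assume "\<not> ?thesis"
  then have H: "\<And>n. i < n \<Longrightarrow> n \<le> j \<Longrightarrow> b n \<le> b (n-1)" by (meson not_le)
  have "\<forall>k::nat. i + int k \<le> j \<longrightarrow> b (i + int k) \<le> b i"
  proof
    fix k show "i + int k \<le> j \<longrightarrow> b (i + int k) \<le> b i"
    proof (induction k)
      case 0 show ?case by simp
    next
      case (Suc k)
      show ?case
      proof
        assume a: "i + int (Suc k) \<le> j"
        have e: "i + int (Suc k) - 1 = i + int k" by simp
        have "b (i + int (Suc k)) \<le> b (i + int (Suc k) - 1)" by (rule H) (use a in auto)
        then have "b (i + int (Suc k)) \<le> b (i + int k)" by (simp only: e)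
        then show "b (i + int (Suc k)) \<le> b i" using Suc a by simp
      qed
    qed
  qed
  from this[rule_format, of "nat (j - i)"] assms show False by simp
qed

lemma good_inf_below:
  assumes "good b" "0 < t"
  shows "infinite {n. b n < t \<and> b (n-1) < b n}"
proof
  let ?S = "{n. b n < t \<and> b (n-1) < b n}"
  assume fin: "finite ?S"
  have mono: "mono b" and pos: "\<And>n. 0 < b n" using assms good_def by auto
  obtain m0 where m0: "b m0 < t" using assms good_def by blast
  obtain L where L: "\<And>n. n \<in> ?S \<Longrightarrow> L \<le> n"
    using bdd_below_finite[OF fin] unfolding bdd_below_def by blast
  define m where "m = min L m0 - 1"
  have bm: "b m \<le> b m0" using mono by (auto simp: m_def monoD)
  obtain j where j: "b j < b m" using assms(1) pos[of m] good_def by blast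
  have "j < m"
  proof (rule ccontr)
    assume "\<not> j < m" then have "b m \<le> b j" using mono by (simp add: monoD)
    then show False using j by simp
  qed
  from mono_step[OF mono this j] obtain n where n: "j < n" "n \<le> m" "b (n-1) < b n" by blast
  have "b n \<le> b m" using mono n by (simp add: monoD)
  then have "n \<in> ?S" using n bm m0 by auto
  then have "L \<le> n" by (rule L)
  then show False using n by (simp add: m_def)
qed

lemma good_inf_above:
  assumes "good b"
  shows "infinite {n. s \<le> b n \<and> b (n-1) < b n}"
proof
  let ?S = "{n. s \<le> b n \<and> b (n-1) < b n}"
  assume fin: "finite ?S"
  have mono: "mono b" and pos: "\<And>n. 0 < b n" using assms good_def by auto
  obtain m1 where m1: "max s 1 \<le> b m1" using assms good_def by (meson zero_less_one less_max_iff_disj)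
  obtain U where U: "\<And>n. n \<in> ?S \<Longrightarrow> n \<le> U"
    using bdd_above_finite[OF fin] unfolding bdd_above_def by blast
  define m where "m = max U m1 + 1"
  have bm: "b m1 \<le> b m" using mono by (auto simp: m_def monoD)
  obtain j where j: "b m + 1 \<le> b j" using assms(1) pos[of m] good_def
    by (metis add_pos_pos zero_less_one)
  have "m < j"
  proof (rule ccontr)
    assume "\<not> m < j" then have "b j \<le> b m" using mono by (simp add: monoD)
    then show False using j by simp
  qed
  from mono_step[OF mono this] j obtain n where n: "m < n" "n \<le> j" "b (n-1) < b n" by fastforce
  have "b m \<le> b (n-1)" using mono n by (simp add: monoD)
  then have "n \<in> ?S" using n bm m1 by auto
  then have "n \<le> U" by (rule U)
  then show False using n by (simp add: m_def)
qed

lemma good_fin: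
  assumes "good b" "0 < s"
  shows "finite {n. s \<le> b n \<and> b n < t}"
proof -
  have mono: "mono b" using assms good_def by auto
  obtain n1 where n1: "b n1 < s" using assms good_def by blast
  obtain n2 where n2: "max t 1 \<le> b n2" using assms good_def by (meson zero_less_one less_max_iff_disj)
  have "{n. s \<le> b n \<and> b n < t} \<subseteq> {n1..n2}"
  proof
    fix n assume n: "n \<in> {n. s \<le> b n \<and> b n < t}"
    have "n1 \<le> n"
    proof (rule ccontr)
      assume "\<not> n1 \<le> n" then have "b n \<le> b n1" using mono by (simp add: monoD)
      then show False using n n1 by simp
    qed
    moreover have "n \<le> n2"
    proof (rule ccontr)
      assume "\<not> n \<le> n2" then have "b n2 \<le> b n" using mono by (simp add: monoD)
      then show False using n n2 by simp
    qed
    ultimately show "n \<in> {n1..n2}" by simp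
  qed
  then show ?thesis using finite_subset by blast
qed

lemma L1:
  assumes "0 < s"
  shows "ennreal s * cnt b s t \<le> dc b t"
proof -
  have "ennreal s * cnt b s t = (\<integral>\<^sup>+n. ennreal s * (if s \<le> b n \<and> b n < t \<and> b (n-1) < b n then 1 else 0) \<partial>count_space UNIV)"
    unfolding cnt_def by (rule nn_integral_cmult[symmetric]) simp
  also have "\<dots> \<le> dc b t" unfolding dc_def
    by (intro nn_integral_mono) (auto simp: ennreal_leI)
  finally show ?thesis .
qed

lemma L2:
  assumes "s \<le> t" "t \<le> u"
  shows "cnt b s u = cnt b s t + cnt b t u"
  unfolding cnt_def
  by (subst nn_integral_add[symmetric]) (use assms in \<open>auto intro!: nn_integral_cong\<close>)

lemma L3:
  assumes "s' \<le> s" "t \<le> t'"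
  shows "cnt b s t \<le> cnt b s' t'"
  unfolding cnt_def using assms by (intro nn_integral_mono) auto

lemma F1:
  assumes "good b" "0 < T" "r < t" "t \<le> T"
  shows "cnt b t T + 1 \<le> cr b T r"
proof -
  obtain N where N: "T \<le> b N" "\<And>n. n < N \<Longrightarrow> b n < T" "\<And>n. N \<le> n \<Longrightarrow> T \<le> b n"
    using good_first[OF assms(1,2)] by blast
  have bN: "b (N-1) < T" using N(2)[of "N-1"] by simp
  have "cnt b t T + 1 = (\<integral>\<^sup>+n. (if t \<le> b n \<and> b n < T \<and> b (n-1) < b n then 1 else 0) + indicator {N} n \<partial>count_space UNIV)"
    unfolding cnt_def by (subst nn_integral_add) auto
  also have "\<dots> \<le> cr b T r" unfolding cr_def
  proof (intro nn_integral_mono)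
    fix n
    show "(if t \<le> b n \<and> b n < T \<and> b (n-1) < b n then 1 else 0) + indicator {N} n
       \<le> (if r < b n \<and> b (n-1) < b n \<and> b (n-1) < T then 1 else (0::ennreal))"
    proof (cases "n = N")
      case True
      have "T \<le> b N" "b (N-1) < b N" "r < b N" "\<not> b N < T" using N(1) bN assms by linarith+
      then show ?thesis using True \<open>b (N-1) < T\<close> by simp
    next
      case False then show ?thesis using assms by auto
    qed
  qed
  finally show ?thesis .
qed

lemma F2:
  assumes "good b" "0 < T" "T < t" "r < t"
  shows "1 \<le> cnt b T t + cr b T r"
proof -
  obtain N where N: "T \<le> b N" "\<And>n. n < N \<Longrightarrow> b n < T" "\<And>n. N \<le> n \<Longrightarrow> T \<le> b n"
    using good_first[OF assms(1,2)] by blast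
  have bN: "b (N-1) < T" using N(2)[of "N-1"] by simp
  have "(1::ennreal) = (\<integral>\<^sup>+n. indicator {N} n \<partial>count_space UNIV)" by simp
  also have "\<dots> \<le> (\<integral>\<^sup>+n. (if T \<le> b n \<and> b n < t \<and> b (n-1) < b n then 1 else 0) +
      (if r < b n \<and> b (n-1) < b n \<and> b (n-1) < T then 1 else 0) \<partial>count_space UNIV)"
  proof (intro nn_integral_mono)
    fix n
    show "indicator {N} n \<le> (if T \<le> b n \<and> b n < t \<and> b (n-1) < b n then 1 else 0) +
      (if r < b n \<and> b (n-1) < b n \<and> b (n-1) < T then 1 else (0::ennreal))"
    proof (cases "n = N")
      case True
      have "T \<le> b N" "b (N-1) < b N" using N(1) bN assms by linarith+
      then show ?thesis using True \<open>b (N-1) < T\<close> assms by auto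
    next
      case False then show ?thesis by auto
    qed
  qed
  also have "\<dots> = cnt b T t + cr b T r" unfolding cnt_def cr_def
    by (subst nn_integral_add) auto
  finally show ?thesis .
qed

lemma LC:
  assumes "good b"
  shows "(\<integral>\<^sup>+r. indicator {0<..} r * cr b T r \<partial>lborel) = dc b T"
proof -
  have "(\<integral>\<^sup>+r. indicator {0<..} r * cr b T r \<partial>lborel) =
    (\<integral>\<^sup>+r. \<integral>\<^sup>+n. indicator {0<..} r * (if r < b n \<and> b (n-1) < b n \<and> b (n-1) < T then 1 else 0) \<partial>count_space UNIV \<partial>lborel)"
    unfolding cr_def by (intro nn_integral_cong nn_integral_cmult[symmetric]) simp
  also have "\<dots> = (\<integral>\<^sup>+n. \<integral>\<^sup>+r. indicator {0<..} r * (if r < b n \<and> b (n-1) < b n \<and> b (n-1) < T then 1 else 0) \<partial>lborel \<partial>count_space UNIV)"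
    by (rule nn_integral_count_space_nn_integral) auto
  also have "\<dots> = dc b T" unfolding dc_def
  proof (intro nn_integral_cong)
    fix n
    show "(\<integral>\<^sup>+r. indicator {0<..} r * (if r < b n \<and> b (n-1) < b n \<and> b (n-1) < T then 1 else 0) \<partial>lborel) =
      (if b (n-1) < b n \<and> b (n-1) < T then ennreal (b n) else 0)"
    proof (cases "b (n-1) < b n \<and> b (n-1) < T")
      case True
      have "(\<integral>\<^sup>+r. indicator {0<..} r * (if r < b n \<and> b (n-1) < b n \<and> b (n-1) < T then 1 else 0) \<partial>lborel) =
          (\<integral>\<^sup>+r. indicator {0<..<b n} r \<partial>lborel)"
        using True by (intro nn_integral_cong) (auto simp: indicator_def)
      also have "\<dots> = ennreal (b n)" using assms good_def by (simp add: less_imp_le)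
      finally show ?thesis using True by simp
    next
      case False
      have "(\<integral>\<^sup>+r. indicator {0<..} r * (if r < b n \<and> b (n-1) < b n \<and> b (n-1) < T then 1 else 0) \<partial>lborel) =
          (\<integral>\<^sup>+r. 0 \<partial>(lborel::real measure))"
        using False by (intro nn_integral_cong) auto
      then show ?thesis by (subst if_not_P[OF False]) simp
    qed
  qed
  finally show ?thesis .
qed


definition Cn :: "'a measure \<Rightarrow> ('a \<Rightarrow> int \<Rightarrow> real) \<Rightarrow> real \<Rightarrow> real \<Rightarrow> ennreal" where
  "Cn M \<beta> s t = (\<integral>\<^sup>+\<omega>. cnt (\<beta> \<omega>) s t \<partial>M)"

definition Kf :: "'a measure \<Rightarrow> ('a \<Rightarrow> int \<Rightarrow> real) \<Rightarrow> real \<Rightarrow> real" where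
  "Kf M \<beta> t = (if 1 \<le> t then enn2real (Cn M \<beta> 1 t) else - enn2real (Cn M \<beta> t 1))"

definition Gf :: "'a measure \<Rightarrow> ('a \<Rightarrow> int \<Rightarrow> real) \<Rightarrow> real \<Rightarrow> real" where
  "Gf M \<beta> x = Sup {t. 0 < t \<and> Kf M \<beta> t < x}"

lemma cnt_empty: "t \<le> s \<Longrightarrow> cnt b s t = 0"
  unfolding cnt_def by (subst nn_integral_cong[where v="\<lambda>_. 0"]) auto

lemma inv_mono_nat: "m \<le> n \<Longrightarrow> 1 / (real n + 2) \<le> 1 / (real m + 2)"
  by (simp add: frac_le)

lemma lc_shift:
  fixes f :: "real \<Rightarrow> real"
  assumes "continuous (at_left (x + a)) f"
  shows "continuous (at_left x) (\<lambda>t. f (t + a))"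
  unfolding continuous_within tendsto_iff
proof (intro allI impI)
  fix e :: real assume e: "0 < e"
  from assms e have "eventually (\<lambda>y. dist (f y) (f (x + a)) < e) (at_left (x + a))"
    unfolding continuous_within tendsto_iff by blast
  then obtain b where b: "b < x + a" "\<And>y. b < y \<Longrightarrow> y < x + a \<Longrightarrow> dist (f y) (f (x + a)) < e"
    unfolding eventually_at_left_field by blast
  show "eventually (\<lambda>y. dist (f (y + a)) (f (x + a)) < e) (at_left x)"
    unfolding eventually_at_left_field
    by (intro exI[of _ "b - a"]) (use b in auto)
qed

lemma shift_int:
  fixes G :: "real \<Rightarrow> real"
  assumes "mono G"
  shows "(\<integral>\<^sup>+t. ennreal (G (t + a)) * indicator {..c} t \<partial>lborel) = (\<integral>\<^sup>+t. ennreal (G t) * indicator {..c + a} t \<partial>lborel)"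
proof -
  note [measurable] = borel_measurable_mono[OF assms]
  have "(\<integral>\<^sup>+t. ennreal (G t) * indicator {..c + a} t \<partial>lborel) =
      ennreal \<bar>1\<bar> * (\<integral>\<^sup>+t. ennreal (G (a + 1 * t)) * indicator {..c + a} (a + 1 * t) \<partial>lborel)"
    by (rule nn_integral_real_affine) auto
  also have "\<dots> = (\<integral>\<^sup>+t. ennreal (G (t + a)) * indicator {..c} t \<partial>lborel)"
    unfolding abs_one ennreal_1 mult_1 mult_1_left
    by (intro nn_integral_cong) (auto simp: indicator_def add.commute)
  finally show ?thesis by simp
qed

context
  fixes M :: "'a measure" and \<beta> :: "'a \<Rightarrow> int \<Rightarrow> real" and rho chi :: real
  assumes P: "prob_space M"
  and meas[measurable]: "\<And>n. (\<lambda>\<omega>. \<beta> \<omega> n) \<in> borel_measurable M"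
  and AEg: "AE \<omega> in M. good (\<beta> \<omega>)"
  and rob: "\<And>T. 0 < T \<Longrightarrow> (\<integral>\<^sup>+\<omega>. dc (\<beta> \<omega>) T \<partial>M) \<le> ennreal (rho*T)"
  and con: "(\<integral>\<^sup>+\<omega>. dc (\<beta> \<omega>) 1 \<partial>M) \<le> ennreal chi"
  and rpos: "0 < rho"
begin

lemma meas_cnt[measurable]: "(\<lambda>\<omega>. cnt (\<beta> \<omega>) s t) \<in> borel_measurable M"
  unfolding cnt_def by measurable

lemma meas_dc[measurable]: "(\<lambda>\<omega>. dc (\<beta> \<omega>) t) \<in> borel_measurable M"
  unfolding dc_def by measurable

lemma meas_cr[measurable]: "(\<lambda>\<omega>. cr (\<beta> \<omega>) T r) \<in> borel_measurable M"
  unfolding cr_def by measurable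

lemma meas_cr2: "(\<lambda>(\<omega>, r). indicator {0<..} r * cr (\<beta> \<omega>) T r) \<in> borel_measurable (M \<Otimes>\<^sub>M lborel)"
  unfolding cr_def by measurable

lemma Cn_fin: assumes "0 < s" "0 < t" shows "Cn M \<beta> s t < \<infinity>"
proof -
  have "ennreal s * Cn M \<beta> s t = (\<integral>\<^sup>+\<omega>. ennreal s * cnt (\<beta> \<omega>) s t \<partial>M)"
    unfolding Cn_def by (rule nn_integral_cmult[symmetric]) simp
  also have "\<dots> \<le> (\<integral>\<^sup>+\<omega>. dc (\<beta> \<omega>) t \<partial>M)"
    by (intro nn_integral_mono L1 assms)
  also have "\<dots> \<le> ennreal (rho * t)" by (rule rob[OF assms(2)])
  finally have "ennreal s * Cn M \<beta> s t < \<infinity>" using le_less_trans by fastforce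
  then show ?thesis using assms by (cases "Cn M \<beta> s t = 0") (auto simp: ennreal_mult_less_top)
qed

lemma Cn_add: assumes "s \<le> t" "t \<le> u" shows "Cn M \<beta> s u = Cn M \<beta> s t + Cn M \<beta> t u"
  unfolding Cn_def L2[OF assms] by (rule nn_integral_add) auto

lemma Cn_mono: assumes "s' \<le> s" "t \<le> t'" shows "Cn M \<beta> s t \<le> Cn M \<beta> s' t'"
  unfolding Cn_def by (intro nn_integral_mono L3 assms)

lemma K_diff: assumes "0 < s" "s \<le> t" shows "Kf M \<beta> t - Kf M \<beta> s = enn2real (Cn M \<beta> s t)"
proof -
  have f: "\<And>a b. 0 < a \<Longrightarrow> 0 < b \<Longrightarrow> Cn M \<beta> a b < top" using Cn_fin by simp
  consider "1 \<le> s" | "s < 1" "1 \<le> t" | "t < 1" using assms by linarith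
  then show ?thesis
  proof cases
    case 1
    then have "Cn M \<beta> 1 t = Cn M \<beta> 1 s + Cn M \<beta> s t" using assms by (intro Cn_add) auto
    then have "enn2real (Cn M \<beta> 1 t) = enn2real (Cn M \<beta> 1 s) + enn2real (Cn M \<beta> s t)"
      using f assms 1 by (simp add: enn2real_plus)
    then show ?thesis using 1 assms by (simp add: Kf_def)
  next
    case 2
    then have "Cn M \<beta> s t = Cn M \<beta> s 1 + Cn M \<beta> 1 t" using assms by (intro Cn_add) auto
    then have "enn2real (Cn M \<beta> s t) = enn2real (Cn M \<beta> s 1) + enn2real (Cn M \<beta> 1 t)"
      using f assms 2 by (simp add: enn2real_plus)
    then show ?thesis using 2 assms by (simp add: Kf_def)
  next
    case 3
    then have "Cn M \<beta> s 1 = Cn M \<beta> s t + Cn M \<beta> t 1" using assms by (intro Cn_add) auto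
    then have "enn2real (Cn M \<beta> s 1) = enn2real (Cn M \<beta> s t) + enn2real (Cn M \<beta> t 1)"
      using f assms 3 by (simp add: enn2real_plus)
    then show ?thesis using 3 assms by (simp add: Kf_def)
  qed
qed

lemma K_mono: assumes "0 < s" "s \<le> t" shows "Kf M \<beta> s \<le> Kf M \<beta> t"
  using K_diff[OF assms] enn2real_nonneg[of "Cn M \<beta> s t"] by linarith

lemma K1: "Kf M \<beta> 1 = 0"
  unfolding Kf_def Cn_def by (simp add: cnt_empty)

lemma AE_inf_int:
  assumes "AE \<omega> in M. (SUP k. f k \<omega>) = \<infinity>" and [measurable]: "\<And>k. f k \<in> borel_measurable M"
    and "incseq f"
  shows "(SUP k. \<integral>\<^sup>+\<omega>. f k \<omega> \<partial>M) = \<infinity>"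
proof -
  have "(SUP k. \<integral>\<^sup>+\<omega>. f k \<omega> \<partial>M) = (\<integral>\<^sup>+\<omega>. (SUP k. f k \<omega>) \<partial>M)"
    by (rule nn_integral_monotone_convergence_SUP[symmetric]) (use assms in auto)
  also have "\<dots> = (\<integral>\<^sup>+\<omega>. \<infinity> \<partial>M)" by (rule nn_integral_cong_AE) (use assms in auto)
  also have "\<dots> = \<infinity>" using prob_space.emeasure_space_1[OF P] by simp
  finally show ?thesis .
qed

lemma K_low: "\<exists>t. 0 < t \<and> Kf M \<beta> t < x"
proof -
  define f where "f k \<omega> = cnt (\<beta> \<omega>) (1 / (real k + 2)) 1" for k \<omega>
  have inc: "incseq f" unfolding f_def incseq_def le_fun_def
    by (auto intro!: L3 inv_mono_nat)
  have "AE \<omega> in M. (SUP k. f k \<omega>) = \<infinity>"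
    using AEg
  proof eventually_elim
    case (elim \<omega>)
    let ?b = "\<beta> \<omega>"
    have "(SUP k. f k \<omega>) = (\<integral>\<^sup>+n. (SUP k. (if 1 / (real k + 2) \<le> ?b n \<and> ?b n < 1 \<and> ?b (n-1) < ?b n then 1 else 0)) \<partial>count_space UNIV)"
      unfolding f_def cnt_def
      by (rule nn_integral_monotone_convergence_SUP[symmetric]) (auto simp: incseq_def le_fun_def intro: order_trans[OF inv_mono_nat])
    also have "\<dots> = (\<integral>\<^sup>+n. (if ?b n < 1 \<and> ?b (n-1) < ?b n then 1 else 0) \<partial>count_space UNIV)"
    proof (intro nn_integral_cong)
      fix n
      show "(SUP k. (if 1 / (real k + 2) \<le> ?b n \<and> ?b n < 1 \<and> ?b (n-1) < ?b n then 1 else 0)) = (if ?b n < 1 \<and> ?b (n-1) < ?b n then 1 else (0::ennreal))"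
      proof (cases "?b n < 1 \<and> ?b (n-1) < ?b n")
        case True
        have "0 < ?b n" using elim good_def by auto
        then obtain k where k: "0 < k" "inverse (real k) < ?b n" using ex_inverse_of_nat_less by blast
        have "1 / (real k + 2) \<le> inverse (real k)" using k by (simp add: field_simps)
        then have k2: "1 / (real k + 2) \<le> ?b n" using k by linarith
        have "(SUP k. (if 1 / (real k + 2) \<le> ?b n \<and> ?b n < 1 \<and> ?b (n-1) < ?b n then 1 else 0)) = (1::ennreal)"
        proof (rule antisym)
          show "(SUP k. (if 1 / (real k + 2) \<le> ?b n \<and> ?b n < 1 \<and> ?b (n-1) < ?b n then 1 else 0)) \<le> (1::ennreal)"
            by (rule SUP_least) auto
          show "(1::ennreal) \<le> (SUP k. (if 1 / (real k + 2) \<le> ?b n \<and> ?b n < 1 \<and> ?b (n-1) < ?b n then 1 else 0))"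
            using k2 True by (intro SUP_upper2[of k]) auto
        qed
        then show ?thesis using True by simp
      next
        case False
        have *: "\<And>k. (if 1 / (real k + 2) \<le> ?b n \<and> ?b n < 1 \<and> ?b (n-1) < ?b n then 1 else 0) = (0::ennreal)"
          using False by auto
        show ?thesis by (simp only: * if_not_P[OF False]) simp
      qed
    qed
    also have "\<dots> = emeasure (count_space UNIV) {n. ?b n < 1 \<and> ?b (n-1) < ?b n}" by (rule cs_ind)
    also have "\<dots> = \<infinity>" using good_inf_below[OF elim, of 1] by simp
    finally show ?case .
  qed
  then have SUPinf: "(SUP k. \<integral>\<^sup>+\<omega>. f k \<omega> \<partial>M) = \<infinity>"
    by (intro AE_inf_int inc) (auto simp: f_def)
  have "ennreal (\<bar>x\<bar> + 1) < (SUP k. \<integral>\<^sup>+\<omega>. f k \<omega> \<partial>M)" unfolding SUPinf by simp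
  then obtain k where k: "ennreal (\<bar>x\<bar> + 1) < Cn M \<beta> (1 / (real k + 2)) 1"
    unfolding less_SUP_iff Cn_def f_def by blast
  have t0: "0 < 1 / (real k + 2)" "1 / (real k + 2) < 1" by (auto simp: field_simps)
  have fin: "Cn M \<beta> (1 / (real k + 2)) 1 < \<infinity>" using Cn_fin t0 by simp
  have "\<bar>x\<bar> + 1 < enn2real (Cn M \<beta> (1 / (real k + 2)) 1)"
  proof -
    have "ennreal (\<bar>x\<bar> + 1) < ennreal (enn2real (Cn M \<beta> (1 / (real k + 2)) 1))"
      using k fin by simp
    then show ?thesis by (subst (asm) ennreal_less_iff) auto
  qed
  then have "Kf M \<beta> (1 / (real k + 2)) < x" using t0 by (simp add: Kf_def)
  then show ?thesis using t0 by blast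
qed


lemma K_high: "\<exists>t. 0 < t \<and> x \<le> Kf M \<beta> t"
proof -
  define f where "f k \<omega> = cnt (\<beta> \<omega>) 1 (real k + 2)" for k \<omega>
  have inc: "incseq f" unfolding f_def incseq_def le_fun_def
    by (auto intro!: L3)
  have "AE \<omega> in M. (SUP k. f k \<omega>) = \<infinity>"
    using AEg
  proof eventually_elim
    case (elim \<omega>)
    let ?b = "\<beta> \<omega>"
    have "(SUP k. f k \<omega>) = (\<integral>\<^sup>+n. (SUP k. (if 1 \<le> ?b n \<and> ?b n < real k + 2 \<and> ?b (n-1) < ?b n then 1 else 0)) \<partial>count_space UNIV)"
      unfolding f_def cnt_def
      by (rule nn_integral_monotone_convergence_SUP[symmetric]) (auto simp: incseq_def le_fun_def)
    also have "\<dots> = (\<integral>\<^sup>+n. (if 1 \<le> ?b n \<and> ?b (n-1) < ?b n then 1 else 0) \<partial>count_space UNIV)"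
    proof (intro nn_integral_cong)
      fix n
      show "(SUP k. (if 1 \<le> ?b n \<and> ?b n < real k + 2 \<and> ?b (n-1) < ?b n then 1 else 0)) = (if 1 \<le> ?b n \<and> ?b (n-1) < ?b n then 1 else (0::ennreal))"
      proof (cases "1 \<le> ?b n \<and> ?b (n-1) < ?b n")
        case True
        define k where "k = nat \<lceil>?b n\<rceil>"
        have k2: "?b n < real k + 2" unfolding k_def by linarith
        have "(SUP k. (if 1 \<le> ?b n \<and> ?b n < real k + 2 \<and> ?b (n-1) < ?b n then 1 else 0)) = (1::ennreal)"
        proof (rule antisym)
          show "(SUP k. (if 1 \<le> ?b n \<and> ?b n < real k + 2 \<and> ?b (n-1) < ?b n then 1 else 0)) \<le> (1::ennreal)"
            by (rule SUP_least) auto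
          show "(1::ennreal) \<le> (SUP k. (if 1 \<le> ?b n \<and> ?b n < real k + 2 \<and> ?b (n-1) < ?b n then 1 else 0))"
            using k2 True by (intro SUP_upper2[of k]) auto
        qed
        then show ?thesis using True by simp
      next
        case False
        have *: "\<And>k. (if 1 \<le> ?b n \<and> ?b n < real k + 2 \<and> ?b (n-1) < ?b n then 1 else 0) = (0::ennreal)"
          using False by auto
        show ?thesis by (simp only: * if_not_P[OF False]) simp
      qed
    qed
    also have "\<dots> = emeasure (count_space UNIV) {n. 1 \<le> ?b n \<and> ?b (n-1) < ?b n}" by (rule cs_ind)
    also have "\<dots> = \<infinity>" using good_inf_above[OF elim, of 1] by simp
    finally show ?case .
  qed
  then have SUPinf: "(SUP k. \<integral>\<^sup>+\<omega>. f k \<omega> \<partial>M) = \<infinity>"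
    by (intro AE_inf_int inc) (auto simp: f_def)
  have "ennreal (\<bar>x\<bar> + 1) < (SUP k. \<integral>\<^sup>+\<omega>. f k \<omega> \<partial>M)" unfolding SUPinf by simp
  then obtain k where k: "ennreal (\<bar>x\<bar> + 1) < Cn M \<beta> 1 (real k + 2)"
    unfolding less_SUP_iff Cn_def f_def by blast
  have fin: "Cn M \<beta> 1 (real k + 2) < \<infinity>" using Cn_fin by simp
  have "\<bar>x\<bar> + 1 < enn2real (Cn M \<beta> 1 (real k + 2))"
  proof -
    have "ennreal (\<bar>x\<bar> + 1) < ennreal (enn2real (Cn M \<beta> 1 (real k + 2)))"
      using k fin by simp
    then show ?thesis by (subst (asm) ennreal_less_iff) auto
  qed
  then have "x \<le> Kf M \<beta> (real k + 2)" by (simp add: Kf_def)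
  then show ?thesis by (intro exI[of _ "real k + 2"]) simp
qed

lemma S_ne: "{t. 0 < t \<and> Kf M \<beta> t < x} \<noteq> {}"
  using K_low[of x] by auto

lemma S_bdd: "bdd_above {t. 0 < t \<and> Kf M \<beta> t < x}"
proof -
  obtain t0 where t0: "0 < t0" "x \<le> Kf M \<beta> t0" using K_high by blast
  have "t \<le> t0" if "0 < t" "Kf M \<beta> t < x" for t
  proof (rule ccontr)
    assume "\<not> t \<le> t0"
    then have "Kf M \<beta> t0 \<le> Kf M \<beta> t" using K_mono t0 by simp
    then show False using that t0 by simp
  qed
  then show ?thesis unfolding bdd_above_def by blast
qed

lemma G_upper: "0 < t \<Longrightarrow> Kf M \<beta> t < x \<Longrightarrow> t \<le> Gf M \<beta> x"
  unfolding Gf_def by (rule cSup_upper) (auto intro: S_bdd)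

lemma G_pos: "0 < Gf M \<beta> x"
proof -
  obtain t where "0 < t" "Kf M \<beta> t < x" using K_low by blast
  then show ?thesis using G_upper[of t x] by simp
qed

lemma G_mono: "mono (Gf M \<beta>)"
  unfolding mono_def Gf_def
  by (intro allI impI cSup_subset_mono S_ne S_bdd) auto

lemma G_less: "r < Gf M \<beta> s \<Longrightarrow> \<exists>t. 0 < t \<and> Kf M \<beta> t < s \<and> r < t"
  unfolding Gf_def using less_cSup_iff[OF S_ne S_bdd] by blast

lemma G_ge: "0 < T \<Longrightarrow> Gf M \<beta> x < T \<Longrightarrow> x \<le> Kf M \<beta> T"
  using G_upper[of T x] by linarith

lemma G_one: "0 < x \<Longrightarrow> 1 \<le> Gf M \<beta> x"
  using G_upper[of 1 x] K1 by simp

lemma G_low: "\<exists>x. Gf M \<beta> x < 1"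
proof -
  define x0 where "x0 = - enn2real (Cn M \<beta> (1/2) 1) - 1"
  have "Gf M \<beta> x0 \<le> 1/2" unfolding Gf_def
  proof (rule cSup_least[OF S_ne])
    fix t assume t: "t \<in> {t. 0 < t \<and> Kf M \<beta> t < x0}"
    show "t \<le> 1/2"
    proof (rule ccontr)
      assume "\<not> t \<le> 1/2"
      show False
      proof (cases "1 \<le> t")
        case True
        then have "0 \<le> Kf M \<beta> t" using K_mono[of 1 t] K1 by simp
        then show False using t enn2real_nonneg[of "Cn M \<beta> (1/2) 1"] by (simp add: x0_def)
      next
        case False
        have "Cn M \<beta> t 1 \<le> Cn M \<beta> (1/2) 1" using \<open>\<not> t \<le> 1/2\<close> by (intro Cn_mono) auto
        then have "enn2real (Cn M \<beta> t 1) \<le> enn2real (Cn M \<beta> (1/2) 1)"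
          using Cn_fin[of "1/2" 1] by (intro enn2real_mono) auto
        then show False using t False by (simp add: x0_def Kf_def)
      qed
    qed
  qed
  then show ?thesis by (intro exI[of _ x0]) simp
qed

lemma G_lc: "continuous (at_left x) (Gf M \<beta>)"
  unfolding continuous_within
proof (rule tendstoI)
  fix e :: real assume e: "0 < e"
  have "Gf M \<beta> x - e < Gf M \<beta> x" using e by simp
  then obtain t where t: "0 < t" "Kf M \<beta> t < x" "Gf M \<beta> x - e < t" using G_less by blast
  have "eventually (\<lambda>y. y \<in> {Kf M \<beta> t<..<x}) (at_left x)" using t by (intro eventually_at_left_real)
  then show "eventually (\<lambda>y. dist (Gf M \<beta> y) (Gf M \<beta> x) < e) (at_left x)"
  proof (rule eventually_mono)
    fix y assume y: "y \<in> {Kf M \<beta> t<..<x}"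
    have "t \<le> Gf M \<beta> y" using y t by (intro G_upper) auto
    moreover have "Gf M \<beta> y \<le> Gf M \<beta> x" using G_mono y by (simp add: monoD)
    ultimately show "dist (Gf M \<beta> y) (Gf M \<beta> x) < e" using t by (simp add: dist_real_def)
  qed
qed


lemma int_one: "(\<integral>\<^sup>+\<omega>. 1 \<partial>M) = 1"
  using prob_space.emeasure_space_1[OF P] by simp

lemma KEY:
  assumes T: "0 < T"
  shows "(\<integral>\<^sup>+s. ennreal (Gf M \<beta> s) * indicator {..Kf M \<beta> T + 1} s \<partial>lborel) \<le> (\<integral>\<^sup>+\<omega>. dc (\<beta> \<omega>) T \<partial>M)"
proof -
  define y where "y = Kf M \<beta> T + 1"
  define E where "E r = (\<integral>\<^sup>+\<omega>. cr (\<beta> \<omega>) T r \<partial>M)" for r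
  define G where "G = Gf M \<beta>"
  note Gm[measurable] = borel_measurable_mono[OF G_mono[folded G_def]]
  interpret PS: pair_sigma_finite M "lborel :: real measure"
    by (intro pair_sigma_finite.intro prob_space_imp_sigma_finite P sigma_finite_lborel)
  have step1: "(\<integral>\<^sup>+s. ennreal (G s) * indicator {..y} s \<partial>lborel) =
     (\<integral>\<^sup>+s. \<integral>\<^sup>+r. (if s \<le> y \<and> 0 < r \<and> r < G s then 1 else 0) \<partial>lborel \<partial>lborel)"
  proof (intro nn_integral_cong)
    fix s
    show "ennreal (G s) * indicator {..y} s = (\<integral>\<^sup>+r. (if s \<le> y \<and> 0 < r \<and> r < G s then 1 else 0) \<partial>lborel)"
    proof (cases "s \<le> y")
      case True
      have "(\<integral>\<^sup>+r. (if s \<le> y \<and> 0 < r \<and> r < G s then 1 else 0) \<partial>lborel) = (\<integral>\<^sup>+r. indicator {0<..<G s} r \<partial>lborel)"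
        using True by (intro nn_integral_cong) (auto simp: indicator_def)
      also have "\<dots> = ennreal (G s)" using G_pos[of s] by (simp add: G_def less_imp_le)
      finally show ?thesis using True by simp
    next
      case False
      have "(\<integral>\<^sup>+r. (if s \<le> y \<and> 0 < r \<and> r < G s then 1 else 0) \<partial>lborel) = (\<integral>\<^sup>+r. 0 \<partial>(lborel::real measure))"
        using False by (intro nn_integral_cong) auto
      then show ?thesis using False by simp
    qed
  qed
  have step2: "(\<integral>\<^sup>+s. \<integral>\<^sup>+r. (if s \<le> y \<and> 0 < r \<and> r < G s then 1 else 0) \<partial>lborel \<partial>lborel) =
     (\<integral>\<^sup>+r. \<integral>\<^sup>+s. (if s \<le> y \<and> 0 < r \<and> r < G s then 1 else 0) \<partial>lborel \<partial>lborel)"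
    by (rule lborel_pair.Fubini') measurable
  have step3: "(\<integral>\<^sup>+s. (if s \<le> y \<and> 0 < r \<and> r < G s then 1 else 0) \<partial>lborel) \<le> indicator {0<..} r * E r" for r
  proof (cases "0 < r")
    case False
    have "(\<integral>\<^sup>+s. (if s \<le> y \<and> 0 < r \<and> r < G s then 1 else 0) \<partial>lborel) = (\<integral>\<^sup>+s. 0 \<partial>(lborel::real measure))"
      using False by (intro nn_integral_cong) auto
    then show ?thesis by simp
  next
    case True
    show ?thesis
    proof (cases "E r = \<infinity>")
      case True
      then show ?thesis using \<open>0 < r\<close> by simp
    next
      case False
      define e where "e = enn2real (E r)"
      have Ee: "E r = ennreal e" using False by (simp add: e_def less_top)
      have e0: "0 \<le> e" by (simp add: e_def)
      have pt: "(if s \<le> y \<and> 0 < r \<and> r < G s then 1 else 0) \<le> (indicator {y - e..y} s :: ennreal)" for s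
      proof (cases "s \<le> y \<and> 0 < r \<and> r < G s")
        case True
        then obtain t where t: "0 < t" "Kf M \<beta> t < s" "r < t" using G_less[of r s] by (auto simp: G_def)
        have "y - e \<le> Kf M \<beta> t"
        proof (cases "t \<le> T")
          case True
          have d: "Kf M \<beta> T - Kf M \<beta> t = enn2real (Cn M \<beta> t T)" using K_diff[OF t(1) True] .
          have "Cn M \<beta> t T + 1 = (\<integral>\<^sup>+\<omega>. cnt (\<beta> \<omega>) t T + 1 \<partial>M)"
            unfolding Cn_def by (subst nn_integral_add) (auto simp: int_one prob_space.emeasure_space_1[OF P])
          also have "\<dots> \<le> E r" unfolding E_def
            using AEg by (intro nn_integral_mono_AE) (auto elim!: eventually_mono intro: F1[OF _ T t(3) True])
          finally have "Cn M \<beta> t T + 1 \<le> ennreal e" using Ee by simp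
          moreover have "Cn M \<beta> t T = ennreal (enn2real (Cn M \<beta> t T))" using Cn_fin[OF t(1) T] by simp
          ultimately have "ennreal (enn2real (Cn M \<beta> t T) + 1) \<le> ennreal e"
            by (metis ennreal_plus enn2real_nonneg zero_le_one ennreal_1)
          then have "enn2real (Cn M \<beta> t T) + 1 \<le> e" using e0 by (subst (asm) ennreal_le_iff) auto
          then show ?thesis using d by (simp add: y_def)
        next
          case False
          then have tT: "T \<le> t" by simp
          have d: "Kf M \<beta> t - Kf M \<beta> T = enn2real (Cn M \<beta> T t)" using K_diff[OF T tT] .
          have "(1::ennreal) = (\<integral>\<^sup>+\<omega>. 1 \<partial>M)" by (rule int_one[symmetric])
          also have "\<dots> \<le> (\<integral>\<^sup>+\<omega>. cnt (\<beta> \<omega>) T t + cr (\<beta> \<omega>) T r \<partial>M)"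
            using AEg False by (intro nn_integral_mono_AE) (auto elim!: eventually_mono intro: F2[OF _ T _ t(3)])
          also have "\<dots> = Cn M \<beta> T t + E r" unfolding Cn_def E_def
            by (rule nn_integral_add) auto
          finally have "1 \<le> Cn M \<beta> T t + ennreal e" using Ee by simp
          moreover have "Cn M \<beta> T t = ennreal (enn2real (Cn M \<beta> T t))" using Cn_fin[OF T t(1)] by simp
          ultimately have "ennreal 1 \<le> ennreal (enn2real (Cn M \<beta> T t) + e)"
            by (metis ennreal_plus enn2real_nonneg e0 ennreal_1)
          then have "1 \<le> enn2real (Cn M \<beta> T t) + e" using e0 by (subst (asm) ennreal_le_iff) auto
          then show ?thesis using d by (simp add: y_def)
        qed
        then show ?thesis using True t by (auto simp: indicator_def)
      next
        case False then show ?thesis by (subst if_not_P[OF False]) simp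
      qed
      have "(\<integral>\<^sup>+s. (if s \<le> y \<and> 0 < r \<and> r < G s then 1 else 0) \<partial>lborel) \<le> (\<integral>\<^sup>+s. indicator {y - e..y} s \<partial>lborel)"
        by (intro nn_integral_mono pt)
      also have "\<dots> = ennreal e" using e0 by simp
      finally show ?thesis using \<open>0 < r\<close> Ee by simp
    qed
  qed
  have step4: "(\<integral>\<^sup>+r. indicator {0<..} r * E r \<partial>lborel) = (\<integral>\<^sup>+\<omega>. dc (\<beta> \<omega>) T \<partial>M)"
  proof -
    have "(\<integral>\<^sup>+r. indicator {0<..} r * E r \<partial>lborel) = (\<integral>\<^sup>+r. \<integral>\<^sup>+\<omega>. indicator {0<..} r * cr (\<beta> \<omega>) T r \<partial>M \<partial>lborel)"
      unfolding E_def by (intro nn_integral_cong nn_integral_cmult[symmetric]) simp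
    also have "\<dots> = (\<integral>\<^sup>+\<omega>. \<integral>\<^sup>+r. indicator {0<..} r * cr (\<beta> \<omega>) T r \<partial>lborel \<partial>M)"
      by (rule PS.Fubini') (rule meas_cr2)
    also have "\<dots> = (\<integral>\<^sup>+\<omega>. dc (\<beta> \<omega>) T \<partial>M)"
      using AEg by (intro nn_integral_cong_AE) (auto elim!: eventually_mono intro: LC)
    finally show ?thesis .
  qed
  have "(\<integral>\<^sup>+s. ennreal (G s) * indicator {..y} s \<partial>lborel) \<le> (\<integral>\<^sup>+r. indicator {0<..} r * E r \<partial>lborel)"
    unfolding step1 step2 by (intro nn_integral_mono step3)
  then show ?thesis unfolding step4 y_def G_def .
qed


lemma ROB: "(\<integral>\<^sup>+s. ennreal (Gf M \<beta> s) * indicator {..x+1} s \<partial>lborel) \<le> ennreal (rho * Gf M \<beta> x)"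
proof (rule ennreal_le_epsilon)
  fix e :: real assume e: "0 < e"
  define T where "T = Gf M \<beta> x + e / rho"
  have "0 < e / rho" using rpos e by simp
  then have T: "0 < T" "Gf M \<beta> x < T" using G_pos[of x] by (auto simp: T_def)
  have xK: "x \<le> Kf M \<beta> T" by (rule G_ge[OF T])
  have "(\<integral>\<^sup>+s. ennreal (Gf M \<beta> s) * indicator {..x+1} s \<partial>lborel) \<le>
      (\<integral>\<^sup>+s. ennreal (Gf M \<beta> s) * indicator {..Kf M \<beta> T + 1} s \<partial>lborel)"
    using xK by (intro nn_integral_mono) (auto simp: indicator_def)
  also have "\<dots> \<le> (\<integral>\<^sup>+\<omega>. dc (\<beta> \<omega>) T \<partial>M)" by (rule KEY[OF T(1)])
  also have "\<dots> \<le> ennreal (rho * T)" by (rule rob[OF T(1)])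
  also have "rho * T = rho * Gf M \<beta> x + e" using rpos by (simp add: T_def field_simps)
  also have "ennreal (rho * Gf M \<beta> x + e) = ennreal (rho * Gf M \<beta> x) + ennreal e"
    using rpos G_pos[of x] e by (intro ennreal_plus) auto
  finally show "(\<integral>\<^sup>+s. ennreal (Gf M \<beta> s) * indicator {..x+1} s \<partial>lborel) \<le> ennreal (rho * Gf M \<beta> x) + ennreal e" .
qed

lemma CONS: "(\<integral>\<^sup>+s. ennreal (Gf M \<beta> s) * indicator {..1} s \<partial>lborel) \<le> ennreal chi"
  using KEY[of 1] con by (simp add: K1)

lemma NEAR:
  assumes c: "0 < c" and ep: "0 < ep"
  shows "\<exists>t1 t2. 0 < t1 \<and> t1 < c \<and> c < t2 \<and> Cn M \<beta> t1 t2 < ennreal (1 + ep)"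
proof -
  define t1 where "t1 k = c - c / (real k + 2)" for k
  define t2 where "t2 k = c + 1 / (real k + 1)" for k
  have t1pos: "0 < t1 k" for k
  proof -
    have "0 \<le> c * real k" using c by simp
    then have "0 < c + c * real k" using c by linarith
    then show ?thesis unfolding t1_def using c by (simp add: field_simps)
  qed
  have t1c: "t1 k < c" for k unfolding t1_def using c by simp
  have t2c: "c < t2 k" for k unfolding t2_def by simp
  have t1m: "t1 k \<le> t1 (Suc k)" for k unfolding t1_def using c by (simp add: frac_le)
  have t2m: "t2 (Suc k) \<le> t2 k" for k unfolding t2_def by (simp add: frac_le)
  define f where "f k \<omega> = cnt (\<beta> \<omega>) (t1 k) (t2 k)" for k \<omega>
  have "(\<integral>\<^sup>+\<omega>. (INF k. f k \<omega>) \<partial>M) = (INF k. \<integral>\<^sup>+\<omega>. f k \<omega> \<partial>M)"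
  proof (rule nn_integral_monotone_convergence_INF_AE')
    show "AE \<omega> in M. f (Suc k) \<omega> \<le> f k \<omega>" for k
      unfolding f_def by (intro AE_I2 L3 t1m t2m)
    show "f k \<in> borel_measurable M" for k unfolding f_def by measurable
    show "(\<integral>\<^sup>+\<omega>. f 0 \<omega> \<partial>M) < \<infinity>" unfolding f_def
      using Cn_fin[OF t1pos[of 0], of "t2 0"] t2c[of 0] t1pos[of 0] t1c[of 0] by (simp add: Cn_def)
  qed
  moreover have "(\<integral>\<^sup>+\<omega>. (INF k. f k \<omega>) \<partial>M) \<le> (\<integral>\<^sup>+\<omega>. 1 \<partial>M)"
  proof (rule nn_integral_mono_AE)
    show "AE \<omega> in M. (INF k. f k \<omega>) \<le> 1" using AEg
    proof eventually_elim
      case (elim \<omega>)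
      let ?b = "\<beta> \<omega>"
      define g where "g k n = (if t1 k \<le> ?b n \<and> ?b n < t2 k \<and> ?b (n-1) < ?b n then 1 else (0::ennreal))" for k n
      have mono_b: "mono ?b" using elim good_def by auto
      have fin0: "finite {n. t1 0 \<le> ?b n \<and> ?b n < t2 0 \<and> ?b (n-1) < ?b n}"
        by (rule finite_subset[OF _ good_fin[OF elim t1pos[of 0], of "t2 0"]]) auto
      have "(INF k. f k \<omega>) = (\<integral>\<^sup>+n. (INF k. g k n) \<partial>count_space UNIV)"
        unfolding f_def cnt_def g_def
      proof (rule nn_integral_monotone_convergence_INF_AE'[symmetric])
        show "AE n in count_space UNIV. (if t1 (Suc k) \<le> ?b n \<and> ?b n < t2 (Suc k) \<and> ?b (n-1) < ?b n then 1 else (0::ennreal))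
            \<le> (if t1 k \<le> ?b n \<and> ?b n < t2 k \<and> ?b (n-1) < ?b n then 1 else 0)" for k
          using t1m[of k] t2m[of k] by (intro AE_I2) auto
        show "(\<integral>\<^sup>+n. (if t1 0 \<le> ?b n \<and> ?b n < t2 0 \<and> ?b (n-1) < ?b n then 1 else (0::ennreal)) \<partial>count_space UNIV) < \<infinity>"
          using fin0 by (simp add: cs_ind of_nat_less_top)
      qed simp
      also have "\<dots> \<le> (\<integral>\<^sup>+n. (if ?b n = c \<and> ?b (n-1) < ?b n then 1 else 0) \<partial>count_space UNIV)"
      proof (intro nn_integral_mono)
        fix n
        show "(INF k. g k n) \<le> (if ?b n = c \<and> ?b (n-1) < ?b n then 1 else 0)"
        proof (cases "?b (n-1) < ?b n")
          case False
          then show ?thesis by (intro INF_lower2[of 0]) (auto simp: g_def)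
        next
          case P: True
          consider "?b n = c" | "?b n < c" | "c < ?b n" by linarith
          then show ?thesis
          proof cases
            case 1 then show ?thesis using P by (intro INF_lower2[of 0]) (auto simp: g_def)
          next
            case 2
            have "0 < (c - ?b n) / c" using 2 c by simp
            then obtain k where k: "0 < k" "inverse (real k) < (c - ?b n) / c" using ex_inverse_of_nat_less by blast
            have "c / (real k + 2) \<le> c / real k" using k c by (intro divide_left_mono) auto
            also have "c / real k < c - ?b n" using k c by (simp add: field_simps)
            finally have "?b n < t1 k" unfolding t1_def by simp
            then show ?thesis by (intro INF_lower2[of k]) (auto simp: g_def)
          next
            case 3
            have "0 < ?b n - c" using 3 by simp
            then obtain k where k: "0 < k" "inverse (real k) < ?b n - c" using ex_inverse_of_nat_less by blast
            have "1 / (real k + 1) \<le> inverse (real k)" using k by (simp add: field_simps)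
            then have "t2 k \<le> ?b n" using k unfolding t2_def by simp
            then show ?thesis by (intro INF_lower2[of k]) (auto simp: g_def)
          qed
        qed
      qed
      also have "\<dots> = emeasure (count_space UNIV) {n. ?b n = c \<and> ?b (n-1) < ?b n}" by (rule cs_ind)
      also have "\<dots> \<le> 1"
      proof (cases "{n. ?b n = c \<and> ?b (n-1) < ?b n} = {}")
        case True then show ?thesis by (simp only: True emeasure_empty) simp
      next
        case False
        then obtain n0 where n0: "?b n0 = c" "?b (n0-1) < ?b n0" by auto
        have "{n. ?b n = c \<and> ?b (n-1) < ?b n} \<subseteq> {n0}"
        proof
          fix n assume n: "n \<in> {n. ?b n = c \<and> ?b (n-1) < ?b n}"
          have False if "n < n0"
          proof -
            have "?b n \<le> ?b (n0 - 1)" using that mono_b by (simp add: monoD)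
            then show False using n n0 by simp
          qed
          moreover have False if "n0 < n"
          proof -
            have "?b n0 \<le> ?b (n - 1)" using that mono_b by (simp add: monoD)
            then show False using n n0 by simp
          qed
          ultimately show "n \<in> {n0}" by fastforce
        qed
        then have "emeasure (count_space UNIV) {n. ?b n = c \<and> ?b (n-1) < ?b n} \<le> emeasure (count_space UNIV) {n0}"
          by (intro emeasure_mono) auto
        then show ?thesis by simp
      qed
      finally show ?case .
    qed
  qed
  ultimately have "(INF k. Cn M \<beta> (t1 k) (t2 k)) \<le> 1"
    using int_one by (simp add: f_def Cn_def)
  also have "(1::ennreal) < ennreal (1 + ep)" using ep by simp
  finally obtain k where "Cn M \<beta> (t1 k) (t2 k) < ennreal (1 + ep)" unfolding INF_less_iff by blast
  then show ?thesis using t1pos t1c t2c by blast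
qed

lemma FLAT: assumes xy: "x + 1 < y" shows "Gf M \<beta> x < Gf M \<beta> y"
proof (rule ccontr)
  assume "\<not> Gf M \<beta> x < Gf M \<beta> y"
  moreover have "Gf M \<beta> x \<le> Gf M \<beta> y" using G_mono xy by (simp add: monoD)
  ultimately have eq: "Gf M \<beta> y = Gf M \<beta> x" by simp
  define c where "c = Gf M \<beta> x"
  have c: "0 < c" using G_pos by (simp add: c_def)
  obtain t1 t2 where t: "0 < t1" "t1 < c" "c < t2" "Cn M \<beta> t1 t2 < ennreal (1 + (y - x - 1))"
    using NEAR[OF c, of "y - x - 1"] xy by auto
  obtain t' where t': "0 < t'" "Kf M \<beta> t' < x" "t1 < t'" using G_less[of t1 x] t by (auto simp: c_def)
  have t'c: "t' \<le> c" using G_upper[OF t'(1,2)] by (simp add: c_def)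
  have yK: "y \<le> Kf M \<beta> t2" using G_ge[of t2 y] t c eq by (simp add: c_def)
  have d: "Kf M \<beta> t2 - Kf M \<beta> t' = enn2real (Cn M \<beta> t' t2)" using t'c t by (intro K_diff t'(1)) auto
  have "Cn M \<beta> t' t2 \<le> Cn M \<beta> t1 t2" using t' by (intro Cn_mono) auto
  then have "Cn M \<beta> t' t2 < ennreal (y - x)" using t(4) by simp
  moreover have "Cn M \<beta> t' t2 = ennreal (enn2real (Cn M \<beta> t' t2))" using Cn_fin[OF t'(1), of t2] t by simp
  ultimately have "enn2real (Cn M \<beta> t' t2) < y - x"
    by (metis enn2real_nonneg ennreal_less_iff)
  then show False using d yK t' by linarith
qed


lemma B_main: "\<exists>G. bidding_profile rho chi G \<and> (\<forall>x y. x + 1 < y \<longrightarrow> G x < G y)"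
proof -
  define G where "G = Gf M \<beta>"
  define A where "A = {x. 1 \<le> G x}"
  define x0 where "x0 = Inf A"
  have monoG: "mono G" using G_mono by (simp add: G_def)
  have A1: "1 \<in> A" using G_one[of 1] by (simp add: A_def G_def)
  obtain x1 where x1: "G x1 < 1" using G_low by (auto simp: G_def)
  have Ab: "x1 \<le> z" if "z \<in> A" for z
  proof (rule ccontr)
    assume "\<not> x1 \<le> z" then have "G z \<le> G x1" using monoG by (simp add: monoD)
    then show False using that x1 by (simp add: A_def)
  qed
  have bddA: "bdd_below A" using Ab unfolding bdd_below_def by blast
  have Ane: "A \<noteq> {}" using A1 by auto
  have x0z: "x0 \<le> z" if "0 < z" for z
    using G_one[OF that] by (auto simp: x0_def A_def G_def intro!: cInf_lower bddA[unfolded A_def G_def])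
  have x0le: "x0 \<le> 0"
  proof (rule ccontr)
    assume "\<not> x0 \<le> 0"
    then have "x0 \<le> x0 / 2" using x0z[of "x0/2"] by simp
    then show False using \<open>\<not> x0 \<le> 0\<close> by simp
  qed
  have below: "G z < 1" if "z < x0" for z
  proof (rule ccontr)
    assume "\<not> G z < 1" then have "z \<in> A" by (simp add: A_def)
    then have "x0 \<le> z" unfolding x0_def by (rule cInf_lower[OF _ bddA])
    then show False using that by simp
  qed
  have above: "1 \<le> G z" if "x0 < z" for z
  proof -
    have "\<exists>a\<in>A. a < z" using cInf_less_iff[OF Ane bddA, of z] that by (simp add: x0_def)
    then obtain a where a: "a \<in> A" "a < z" by blast
    then have "G a \<le> G z" using monoG by (simp add: monoD)
    then show ?thesis using a by (simp add: A_def)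
  qed
  define H where "H x = G (x + x0)" for x
  have "bidding_profile rho chi H"
    unfolding bidding_profile_def
  proof (intro conjI allI impI)
    show "mono H" unfolding H_def mono_def using monoG by (simp add: monoD)
    show "continuous (at_left x) H" for x unfolding H_def G_def by (intro lc_shift G_lc)
    show "0 < H x" for x unfolding H_def G_def by (rule G_pos)
    show "H x < 1" if "x < 0" for x unfolding H_def using that by (intro below) simp
    show "1 \<le> H x" if "0 < x" for x unfolding H_def using that by (intro above) simp
    show "(\<integral>\<^sup>+t. ennreal (H t) * indicator {..x+1} t \<partial>lborel) \<le> ennreal (rho * H x)" for x
    proof -
      have "(\<integral>\<^sup>+t. ennreal (H t) * indicator {..x+1} t \<partial>lborel) = (\<integral>\<^sup>+t. ennreal (G t) * indicator {..(x + x0)+1} t \<partial>lborel)"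
        unfolding H_def using shift_int[OF monoG, of x0 "x+1"] by (simp add: algebra_simps)
      also have "\<dots> \<le> ennreal (rho * G (x + x0))" unfolding G_def by (rule ROB)
      finally show ?thesis by (simp add: H_def)
    qed
    show "(\<integral>\<^sup>+t. ennreal (H t) * indicator {..1} t \<partial>lborel) \<le> ennreal chi"
    proof -
      have "(\<integral>\<^sup>+t. ennreal (H t) * indicator {..1} t \<partial>lborel) = (\<integral>\<^sup>+t. ennreal (G t) * indicator {..1 + x0} t \<partial>lborel)"
        unfolding H_def using shift_int[OF monoG, of x0 1] by simp
      also have "\<dots> \<le> (\<integral>\<^sup>+t. ennreal (G t) * indicator {..1} t \<partial>lborel)"
        using x0le by (intro nn_integral_mono) (auto simp: indicator_def)
      also have "\<dots> \<le> ennreal chi" unfolding G_def by (rule CONS)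
      finally show ?thesis .
    qed
  qed
  moreover have "\<forall>x y. x + 1 < y \<longrightarrow> H x < H y"
    unfolding H_def G_def by (auto intro!: FLAT)
  ultimately show ?thesis by blast
qed

end

definition hc :: "(int \<Rightarrow> real) \<Rightarrow> real \<Rightarrow> ennreal" where
  "hc b T = (\<integral>\<^sup>+n. (if b (n-1) < T then ennreal (b n) else 0) \<partial>count_space UNIV)"

lemma dc_le_hc: "dc b T \<le> hc b T"
  unfolding dc_def hc_def by (intro nn_integral_mono) auto

lemma det_good: assumes "det_strategy b" shows "good b"
  unfolding good_def
proof (intro conjI allI impI)
  show "0 < b n" for n using assms unfolding det_strategy_def by auto
  show "mono b" using assms unfolding det_strategy_def by (auto intro: strict_mono_mono)
  fix T :: real assume T: "0 < T"
  then obtain n where n: "T \<le> b n" "\<forall>m<n. b m < T" using assms unfolding det_strategy_def by blast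
  show "\<exists>n. T \<le> b n" using n by blast
  show "\<exists>n. b n < T" using n(2)[rule_format, of "n-1"] by auto
qed

lemma det_cost_eq:
  assumes "det_strategy b" "0 < T"
  shows "det_cost b T = hc b T"
proof -
  have sm: "strict_mono b" using assms unfolding det_strategy_def by auto
  obtain n0 where n0: "T \<le> b n0" "\<And>m. m < n0 \<Longrightarrow> b m < T"
    using assms unfolding det_strategy_def by blast
  have ns: "nstar b T = n0" unfolding nstar_def
  proof (rule the_equality)
    show "T \<le> b n0 \<and> (\<forall>m<n0. b m < T)" using n0 by auto
    fix n assume n: "T \<le> b n \<and> (\<forall>m<n. b m < T)"
    show "n = n0"
    proof (rule ccontr)
      assume "n \<noteq> n0"
      then consider "n < n0" | "n0 < n" by linarith
      then show False
      proof cases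
        case 1 then show False using n0(2)[of n] n by simp
      next
        case 2 then show False using n n0(1) by auto
      qed
    qed
  qed
  show ?thesis unfolding det_cost_def hc_def ns
  proof (intro nn_integral_cong)
    fix n
    show "ennreal (b n) * indicator {..n0} n = (if b (n-1) < T then ennreal (b n) else 0)"
    proof (cases "n \<le> n0")
      case True then have "b (n-1) < T" using n0(2)[of "n-1"] by simp
      then show ?thesis using True by simp
    next
      case False then have "b n0 \<le> b (n-1)" using strict_mono_leD[OF sm, of n0 "n-1"] by simp
      then have "\<not> b (n-1) < T" using n0(1) by simp
      then show ?thesis using False by simp
    qed
  qed
qed

lemma unit_sum:
  assumes [measurable]: "f \<in> borel_measurable borel"
  shows "(\<integral>\<^sup>+u. indicator {0<..1} u * (\<integral>\<^sup>+n. f (real_of_int n + u) \<partial>count_space UNIV) \<partial>lborel) = (\<integral>\<^sup>+s. f s \<partial>lborel)"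
proof -
  have "(\<integral>\<^sup>+s. f s \<partial>lborel) = (\<integral>\<^sup>+s. \<integral>\<^sup>+n. f s * indicator {real_of_int n<..real_of_int n + 1} s \<partial>count_space UNIV \<partial>lborel)"
  proof (intro nn_integral_cong)
    fix s :: real
    have "(\<integral>\<^sup>+n. f s * indicator {real_of_int n<..real_of_int n + 1} s \<partial>count_space UNIV) =
        (\<integral>\<^sup>+n. f s * indicator {\<lceil>s\<rceil> - 1} n \<partial>count_space UNIV)"
    proof (intro nn_integral_cong)
      fix n :: int
      have "(real_of_int n < s \<and> s \<le> real_of_int n + 1) \<longleftrightarrow> n = \<lceil>s\<rceil> - 1"
      proof
        assume a: "real_of_int n < s \<and> s \<le> real_of_int n + 1"
        have "\<lceil>s\<rceil> \<le> n + 1" using a by (simp add: ceiling_le_iff)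
        moreover have "n < \<lceil>s\<rceil>" using a by (simp add: less_ceiling_iff)
        ultimately show "n = \<lceil>s\<rceil> - 1" by simp
      next
        assume "n = \<lceil>s\<rceil> - 1"
        then show "real_of_int n < s \<and> s \<le> real_of_int n + 1"
          using ceiling_correct[of s] by simp
      qed
      then show "f s * indicator {real_of_int n<..real_of_int n + 1} s = f s * indicator {\<lceil>s\<rceil> - 1} n"
        by (auto simp: indicator_def)
    qed
    also have "\<dots> = f s" by simp
    finally show "f s = (\<integral>\<^sup>+n. f s * indicator {real_of_int n<..real_of_int n + 1} s \<partial>count_space UNIV)" by simp
  qed
  also have "\<dots> = (\<integral>\<^sup>+n. \<integral>\<^sup>+s. f s * indicator {real_of_int n<..real_of_int n + 1} s \<partial>lborel \<partial>count_space UNIV)"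
    by (rule nn_integral_count_space_nn_integral) auto
  also have "\<dots> = (\<integral>\<^sup>+n. \<integral>\<^sup>+u. indicator {0<..1} u * f (real_of_int n + u) \<partial>lborel \<partial>count_space UNIV)"
  proof (rule nn_integral_cong)
    fix n :: int
    have "(\<integral>\<^sup>+s. f s * indicator {real_of_int n<..real_of_int n + 1} s \<partial>lborel) =
      ennreal \<bar>1\<bar> * (\<integral>\<^sup>+u. f (real_of_int n + 1 * u) * indicator {real_of_int n<..real_of_int n + 1} (real_of_int n + 1 * u) \<partial>lborel)"
      by (rule nn_integral_real_affine) auto
    also have "\<dots> = (\<integral>\<^sup>+u. indicator {0<..1} u * f (real_of_int n + u) \<partial>lborel)"
      unfolding abs_one ennreal_1 mult_1 mult_1_left
      by (intro nn_integral_cong) (auto simp: indicator_def)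
    finally show "(\<integral>\<^sup>+s. f s * indicator {real_of_int n<..real_of_int n + 1} s \<partial>lborel) =
      (\<integral>\<^sup>+u. indicator {0<..1} u * f (real_of_int n + u) \<partial>lborel)" .
  qed
  also have "\<dots> = (\<integral>\<^sup>+u. \<integral>\<^sup>+n. indicator {0<..1} u * f (real_of_int n + u) \<partial>count_space UNIV \<partial>lborel)"
    by (rule nn_integral_count_space_nn_integral[symmetric]) auto
  also have "\<dots> = (\<integral>\<^sup>+u. indicator {0<..1} u * (\<integral>\<^sup>+n. f (real_of_int n + u) \<partial>count_space UNIV) \<partial>lborel)"
    by (intro nn_integral_cong nn_integral_cmult) auto
  finally show ?thesis by (rule sym)
qed

lemma cost_bound:
  fixes G :: "real \<Rightarrow> real"
  assumes mono: "mono G" and a: "\<And>x. G x < T \<Longrightarrow> x \<le> a"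
  shows "(\<integral>\<^sup>+u. indicator {0<..1} u * hc (\<lambda>n. G (real_of_int n + u)) T \<partial>lborel)
     \<le> (\<integral>\<^sup>+s. ennreal (G s) * indicator {..a+1} s \<partial>lborel)"
proof -
  note [measurable] = borel_measurable_mono[OF mono]
  have "(\<integral>\<^sup>+u. indicator {0<..1} u * hc (\<lambda>n. G (real_of_int n + u)) T \<partial>lborel) \<le>
     (\<integral>\<^sup>+u. indicator {0<..1} u * (\<integral>\<^sup>+n. ennreal (G (real_of_int n + u)) * indicator {..a+1} (real_of_int n + u) \<partial>count_space UNIV) \<partial>lborel)"
    unfolding hc_def
  proof (intro nn_integral_mono mult_left_mono)
    fix u n
    show "(if G (real_of_int (n - 1) + u) < T then ennreal (G (real_of_int n + u)) else 0)
        \<le> ennreal (G (real_of_int n + u)) * indicator {..a + 1} (real_of_int n + u)"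
    proof (cases "G (real_of_int (n - 1) + u) < T")
      case True
      then have "real_of_int (n - 1) + u \<le> a" by (rule a)
      then show ?thesis using True by (simp add: indicator_def)
    next
      case False then show ?thesis by simp
    qed
  qed simp
  also have "\<dots> = (\<integral>\<^sup>+s. ennreal (G s) * indicator {..a+1} s \<partial>lborel)"
    by (rule unit_sum) measurable
  finally show ?thesis .
qed

lemma prof_small:
  assumes "bidding_profile rho chi G" "0 < T"
  shows "\<exists>x. G x < T"
proof (rule ccontr)
  assume "\<not> ?thesis"
  then have ge: "\<And>x. T \<le> G x" by (simp add: not_less)
  define k where "k = \<bar>chi\<bar> / T + 1"
  have k0: "0 \<le> \<bar>chi\<bar> / T" using assms(2) by simp
  have Tk: "T * k = \<bar>chi\<bar> + T" unfolding k_def using assms(2) by (simp add: field_simps)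
  have k: "0 \<le> k" "chi < T * k" using assms(2) k0 Tk unfolding k_def by auto
  have "ennreal (T * k) = (\<integral>\<^sup>+t. ennreal T * indicator {1 - k..1} t \<partial>lborel)"
    using k assms(2) by (simp add: nn_integral_cmult_indicator ennreal_mult)
  also have "\<dots> \<le> (\<integral>\<^sup>+t. ennreal (G t) * indicator {..1} t \<partial>lborel)"
    using ge by (intro nn_integral_mono) (auto simp: indicator_def ennreal_leI)
  also have "\<dots> \<le> ennreal chi" using assms(1) unfolding bidding_profile_def by blast
  finally have le: "ennreal (T * k) \<le> ennreal chi" .
  have "0 < T * k" using Tk assms(2) by simp
  then show False using le k by (cases "0 \<le> chi") (auto simp: ennreal_le_iff ennreal_neg)
qed


lemma prof_unbdd:
  assumes "bidding_profile rho chi G"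
  shows "\<exists>x. M0 \<le> G x"
proof (rule ccontr)
  assume "\<not> ?thesis"
  then have lt: "\<And>x. G x < M0" by (simp add: not_le)
  have mono: "mono G" and pos: "\<And>x. 0 < G x"
    and rob: "\<And>x. (\<integral>\<^sup>+t. ennreal (G t) * indicator {..x+1} t \<partial>lborel) \<le> ennreal (rho * G x)"
    using assms unfolding bidding_profile_def by auto
  define g0 where "g0 = G 0"
  have g0: "0 < g0" using pos by (simp add: g0_def)
  define k where "k = \<bar>rho\<bar> * \<bar>M0\<bar> / g0"
  have k0: "0 \<le> k" using g0 by (simp add: k_def)
  have gk: "g0 * (k + 1) = \<bar>rho\<bar> * \<bar>M0\<bar> + g0" using g0 by (simp add: k_def field_simps)
  have "ennreal (g0 * (k + 1)) = (\<integral>\<^sup>+t. ennreal g0 * indicator {0..k+1} t \<partial>lborel)"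
    using k0 g0 by (simp add: nn_integral_cmult_indicator ennreal_mult)
  also have "\<dots> \<le> (\<integral>\<^sup>+t. ennreal (G t) * indicator {..k+1} t \<partial>lborel)"
  proof (intro nn_integral_mono)
    fix t
    show "ennreal g0 * indicator {0..k+1} t \<le> ennreal (G t) * indicator {..k+1} t"
    proof (cases "t \<in> {0..k+1}")
      case True then have "g0 \<le> G t" using mono by (simp add: g0_def monoD)
      then show ?thesis using True by (simp add: ennreal_leI)
    next
      case False then show ?thesis by simp
    qed
  qed
  also have "\<dots> \<le> ennreal (rho * G k)" by (rule rob)
  also have "\<dots> \<le> ennreal (\<bar>rho\<bar> * \<bar>M0\<bar>)"
  proof (rule ennreal_leI)
    have "rho * G k \<le> \<bar>rho\<bar> * G k" using pos[of k] by (intro mult_right_mono) auto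
    also have "\<dots> \<le> \<bar>rho\<bar> * \<bar>M0\<bar>" using lt[of k] pos[of k] by (intro mult_left_mono) auto
    finally show "rho * G k \<le> \<bar>rho\<bar> * \<bar>M0\<bar>" .
  qed
  finally have "g0 * (k + 1) \<le> \<bar>rho\<bar> * \<bar>M0\<bar>" by (subst (asm) ennreal_le_iff) auto
  then show False using gk g0 by simp
qed

lemma prof_con:
  assumes "bidding_profile rho chi G"
  shows "(\<integral>\<^sup>+u. indicator {0<..1} u * hc (\<lambda>n. G (real_of_int n + u)) 1 \<partial>lborel) \<le> ennreal chi"
proof -
  have mono: "mono G" and off: "\<And>x. 0 < x \<Longrightarrow> 1 \<le> G x"
    and con: "(\<integral>\<^sup>+t. ennreal (G t) * indicator {..1} t \<partial>lborel) \<le> ennreal chi"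
    using assms unfolding bidding_profile_def by auto
  have a: "x \<le> 0" if "G x < 1" for x using off[of x] that by (cases "0 < x") auto
  have "(\<integral>\<^sup>+u. indicator {0<..1} u * hc (\<lambda>n. G (real_of_int n + u)) 1 \<partial>lborel) \<le>
      (\<integral>\<^sup>+s. ennreal (G s) * indicator {..0+1} s \<partial>lborel)"
    by (rule cost_bound[OF mono a])
  then show ?thesis using con by simp
qed

lemma prof_rob:
  assumes prof: "bidding_profile rho chi G" and T: "0 < T" and rpos: "0 < rho"
  shows "(\<integral>\<^sup>+u. indicator {0<..1} u * hc (\<lambda>n. G (real_of_int n + u)) T \<partial>lborel) \<le> ennreal (rho * T)"
proof -
  have mono: "mono G" and lc: "\<And>x. continuous (at_left x) G"
    and rob: "\<And>x. (\<integral>\<^sup>+t. ennreal (G t) * indicator {..x+1} t \<partial>lborel) \<le> ennreal (rho * G x)"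
    using prof unfolding bidding_profile_def by auto
  define S where "S = {x. G x < T}"
  have Sne: "S \<noteq> {}" using prof_small[OF prof T] by (auto simp: S_def)
  obtain x2 where x2: "T \<le> G x2" using prof_unbdd[OF prof] by blast
  have Sb: "z \<le> x2" if "z \<in> S" for z
  proof (rule ccontr)
    assume "\<not> z \<le> x2" then have "G x2 \<le> G z" using mono by (simp add: monoD)
    then show False using that x2 by (simp add: S_def)
  qed
  have bdd: "bdd_above S" using Sb unfolding bdd_above_def by blast
  define a where "a = Sup S"
  have a: "x \<le> a" if "G x < T" for x unfolding a_def using that by (intro cSup_upper bdd) (simp add: S_def)
  have Ga: "G a \<le> T"
  proof (rule tendsto_upperbound)
    show "(G \<longlongrightarrow> G a) (at_left a)" using lc[of a] by (simp add: continuous_within)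
    have "eventually (\<lambda>y. y \<in> {a - 1<..<a}) (at_left a)" by (intro eventually_at_left_real) simp
    then show "eventually (\<lambda>y. G y \<le> T) (at_left a)"
    proof (rule eventually_mono)
      fix y assume "y \<in> {a - 1<..<a}"
      then have "y < Sup S" by (simp add: a_def)
      then obtain z where z: "z \<in> S" "y < z" using less_cSup_iff[OF Sne bdd] by blast
      then have "G y \<le> G z" using mono by (simp add: monoD)
      then show "G y \<le> T" using z by (simp add: S_def)
    qed
  qed simp
  have "(\<integral>\<^sup>+u. indicator {0<..1} u * hc (\<lambda>n. G (real_of_int n + u)) T \<partial>lborel) \<le>
      (\<integral>\<^sup>+s. ennreal (G s) * indicator {..a+1} s \<partial>lborel)"
    by (rule cost_bound[OF mono a])
  also have "\<dots> \<le> ennreal (rho * G a)" by (rule rob)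
  also have "\<dots> \<le> ennreal (rho * T)" using Ga rpos by (intro ennreal_leI mult_left_mono) auto
  finally show ?thesis .
qed

definition Umeas :: "real measure" where "Umeas = uniform_measure lborel {0<..1}"

lemma PU: "prob_space Umeas"
  unfolding Umeas_def by (rule prob_space_uniform_measure) auto

lemma int_U:
  assumes [measurable]: "f \<in> borel_measurable lborel"
  shows "(\<integral>\<^sup>+u. f u \<partial>Umeas) = (\<integral>\<^sup>+u. indicator {0<..1} u * f u \<partial>lborel)"
  unfolding Umeas_def by (subst nn_integral_uniform_measure) (auto simp: mult.commute divide_ennreal_def)

lemma prof_good:
  assumes prof: "bidding_profile rho chi G"
  shows "good (\<lambda>n. G (real_of_int n + u))"
  unfolding good_def
proof (intro conjI allI impI)
  have mono: "mono G" and pos: "\<And>x. 0 < G x" using prof unfolding bidding_profile_def by auto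
  show "0 < G (real_of_int n + u)" for n by (rule pos)
  show "mono (\<lambda>n. G (real_of_int n + u))" unfolding mono_def using mono by (simp add: monoD)
  fix T :: real assume T: "0 < T"
  obtain x where x: "T \<le> G x" using prof_unbdd[OF prof] by blast
  have "x \<le> real_of_int \<lceil>x - u\<rceil> + u" by linarith
  then have "G x \<le> G (real_of_int \<lceil>x - u\<rceil> + u)" using mono by (simp add: monoD)
  then show "\<exists>n. T \<le> G (real_of_int n + u)" using x by (intro exI[of _ "\<lceil>x - u\<rceil>"]) simp
  obtain y where y: "G y < T" using prof_small[OF prof T] by blast
  have "real_of_int \<lfloor>y - u\<rfloor> + u \<le> y" by linarith
  then have "G (real_of_int \<lfloor>y - u\<rfloor> + u) \<le> G y" using mono by (simp add: monoD)
  then show "\<exists>n. G (real_of_int n + u) < T" using y by (intro exI[of _ "\<lfloor>y - u\<rfloor>"]) simp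
qed

lemma W_profile:
  assumes prof: "bidding_profile rho chi G" and rpos: "0 < rho"
  shows "\<exists>G'. bidding_profile rho chi G' \<and> (\<forall>x y. x + 1 < y \<longrightarrow> G' x < G' y)"
proof -
  have mono: "mono G" using prof unfolding bidding_profile_def by auto
  note Gm[measurable] = borel_measurable_mono[OF mono]
  define \<beta> where "\<beta> u n = G (real_of_int n + u)" for u n
  have meas: "\<And>n. (\<lambda>u. \<beta> u n) \<in> borel_measurable Umeas" unfolding \<beta>_def Umeas_def by measurable
  have AEg: "AE u in Umeas. good (\<beta> u)" unfolding \<beta>_def by (intro AE_I2 prof_good[OF prof])
  have hcm: "(\<lambda>u. hc (\<beta> u) T) \<in> borel_measurable lborel" for T unfolding hc_def \<beta>_def by measurable
  have dcm: "(\<lambda>u. dc (\<beta> u) T) \<in> borel_measurable lborel" for T unfolding dc_def \<beta>_def by measurable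
  have bound: "(\<integral>\<^sup>+u. dc (\<beta> u) T \<partial>Umeas) \<le> (\<integral>\<^sup>+u. indicator {0<..1} u * hc (\<lambda>n. G (real_of_int n + u)) T \<partial>lborel)" for T
  proof -
    have "(\<integral>\<^sup>+u. dc (\<beta> u) T \<partial>Umeas) \<le> (\<integral>\<^sup>+u. hc (\<beta> u) T \<partial>Umeas)"
      by (intro nn_integral_mono dc_le_hc)
    also have "\<dots> = (\<integral>\<^sup>+u. indicator {0<..1} u * hc (\<beta> u) T \<partial>lborel)" by (rule int_U[OF hcm])
    finally show ?thesis unfolding \<beta>_def .
  qed
  have rob: "\<And>T. 0 < T \<Longrightarrow> (\<integral>\<^sup>+u. dc (\<beta> u) T \<partial>Umeas) \<le> ennreal (rho * T)"
    using bound prof_rob[OF prof _ rpos] order_trans by blast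
  have con: "(\<integral>\<^sup>+u. dc (\<beta> u) 1 \<partial>Umeas) \<le> ennreal chi"
    using bound[of 1] prof_con[OF prof] order_trans by blast
  show ?thesis by (rule B_main[OF PU meas AEg rob con rpos])
qed


definition Qp :: "(int \<Rightarrow> real) \<Rightarrow> bool" where
  "Qp b \<longleftrightarrow> (\<forall>n. 0 < b n) \<and> (\<forall>n. b n < b (n+1)) \<and> (\<forall>k::nat. \<exists>n. real k \<le> b n) \<and> (\<forall>k::nat. \<exists>n. b n < 1 / (real k + 1))"

lemma Qp_meas: "{x \<in> space (Pi\<^sub>M UNIV (\<lambda>_. borel)). Qp x} \<in> sets (Pi\<^sub>M UNIV (\<lambda>_::int. (borel :: real measure)))"
  unfolding Qp_def by measurable

lemma Qp_det:
  assumes "Qp b" shows "det_strategy b"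
proof -
  have pos: "\<And>n. 0 < b n" and st: "\<And>n. b n < b (n+1)" using assms unfolding Qp_def by auto
  have sm: "strict_mono b"
  proof (rule strict_monoI)
    fix m n :: int assume "m < n"
    have "\<forall>k::nat. b m < b (m + 1 + int k)"
    proof
      fix k show "b m < b (m + 1 + int k)"
      proof (induction k)
        case 0 show ?case using st[of m] by simp
      next
        case (Suc k)
        have "b (m + 1 + int k) < b (m + 1 + int k + 1)" by (rule st)
        then show ?case using Suc by (simp add: add.assoc)
      qed
    qed
    from this[rule_format, of "nat (n - m - 1)"] \<open>m < n\<close> show "b m < b n" by simp
  qed
  have good: "good b" unfolding good_def
  proof (intro conjI allI impI)
    show "0 < b n" for n by (rule pos)
    show "mono b" using sm by (rule strict_mono_mono)
    fix T :: real assume T: "0 < T"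
    obtain n where n: "real (nat \<lceil>T\<rceil>) \<le> b n" using assms unfolding Qp_def by blast
    have "T \<le> real (nat \<lceil>T\<rceil>)" by linarith
    then show "\<exists>n. T \<le> b n" using n by (intro exI[of _ n]) linarith
    obtain k where k: "0 < k" "inverse (real k) < T" using ex_inverse_of_nat_less T by blast
    obtain m where m: "b m < 1 / (real k + 1)" using assms unfolding Qp_def by blast
    have "1 / (real k + 1) \<le> inverse (real k)" using k by (simp add: field_simps)
    then show "\<exists>n. b n < T" using m k by (intro exI[of _ m]) linarith
  qed
  show ?thesis unfolding det_strategy_def
  proof (intro conjI allI impI)
    show "0 < b n" for n by (rule pos)
    show "strict_mono b" by (rule sm)
    fix T :: real assume T: "0 < T"
    obtain N where "T \<le> b N" "\<And>n. n < N \<Longrightarrow> b n < T" using good_first[OF good T] by metis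
    then show "\<exists>n. T \<le> b n \<and> (\<forall>m<n. b m < T)" by blast
  qed
qed

lemma strat_from:
  assumes prof: "bidding_profile rho chi G" and flat: "\<And>x y. x + 1 < y \<Longrightarrow> G x < G y" and rpos: "0 < rho"
  shows "\<exists>B. rand_strategy B \<and> robust rho B \<and> consistent chi B"
proof -
  have mono: "mono G" and pos: "\<And>x. 0 < G x" using prof unfolding bidding_profile_def by auto
  note Gm[measurable] = borel_measurable_mono[OF mono]
  define seq where "seq u = (\<lambda>n::int. G (real_of_int n + u))" for u
  define PS where "PS = Pi\<^sub>M (UNIV::int set) (\<lambda>_. (borel :: real measure))"
  define B where "B = distr Umeas PS seq"
  have seqm: "seq \<in> measurable Umeas PS"
    unfolding seq_def PS_def
    by (rule measurable_PiM_single') (auto simp: Umeas_def)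
  have sB: "sets B = sets PS" by (simp add: B_def)
  have PB: "prob_space B" unfolding B_def by (rule prob_space.prob_space_distr[OF PU seqm])
  define Sb where "Sb = {x. \<not> G x < G (x + 1)}"
  have Sb_eq: "G (x + 1) = G x" if "x \<in> Sb" for x
    using that mono by (auto simp: Sb_def monoD intro: antisym)
  have inj: "inj_on floor Sb"
  proof (rule inj_onI)
    fix x y assume x: "x \<in> Sb" and y: "y \<in> Sb" and fl: "\<lfloor>x\<rfloor> = \<lfloor>y\<rfloor>"
    have close: "\<bar>x - y\<bar> < 1" using fl by linarith
    show "x = y"
    proof (rule ccontr)
      assume "x \<noteq> y"
      then consider "x < y" | "y < x" by linarith
      then show False
      proof cases
        case 1
        have "G x \<le> G y" "G y \<le> G (x + 1)" using 1 close mono by (auto simp: monoD)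
        then have "G (y + 1) = G x" using Sb_eq[OF x] Sb_eq[OF y] by simp
        moreover have "G x < G (y + 1)" using 1 by (intro flat) simp
        ultimately show False by simp
      next
        case 2
        have "G y \<le> G x" "G x \<le> G (y + 1)" using 2 close mono by (auto simp: monoD)
        then have "G (x + 1) = G y" using Sb_eq[OF x] Sb_eq[OF y] by simp
        moreover have "G y < G (x + 1)" using 2 by (intro flat) simp
        ultimately show False by simp
      qed
    qed
  qed
  have cSb: "countable Sb" by (rule countable_image_inj_on[OF _ inj]) simp
  define N where "N = (\<Union>n::int. (\<lambda>x. x - real_of_int n) ` Sb)"
  have cN: "countable N" unfolding N_def using cSb by auto
  have AEstrict: "AE u in lborel. \<forall>n. seq u n < seq u (n + 1)"
  proof (rule AE_I')
    show "N \<in> null_sets lborel" by (rule countable_imp_null_set_lborel[OF cN])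
    show "{u \<in> space lborel. \<not> (\<forall>n. seq u n < seq u (n + 1))} \<subseteq> N"
    proof
      fix u assume "u \<in> {u \<in> space lborel. \<not> (\<forall>n. seq u n < seq u (n + 1))}"
      then obtain n where n: "\<not> G (real_of_int n + u) < G (real_of_int n + u + 1)"
        by (auto simp: seq_def add_ac)
      then have "real_of_int n + u \<in> Sb" by (simp add: Sb_def)
      then have "(real_of_int n + u) - real_of_int n \<in> (\<lambda>x. x - real_of_int n) ` Sb" by blast
      then show "u \<in> N" unfolding N_def by auto
    qed
  qed
  have AEQ: "AE u in Umeas. Qp (seq u)"
  proof -
    have "AE u in lborel. u \<in> {0<..1} \<longrightarrow> Qp (seq u)"
      using AEstrict
    proof eventually_elim
      case (elim u)
      have g: "good (seq u)" unfolding seq_def by (rule prof_good[OF prof])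
      show ?case unfolding Qp_def
      proof (intro impI conjI allI)
        show "0 < seq u n" for n by (simp add: seq_def pos)
        show "seq u n < seq u (n + 1)" for n using elim by blast
        show "\<exists>n. real k \<le> seq u n" for k
        proof -
          obtain n where "max (real k) 1 \<le> seq u n" using g unfolding good_def by (meson zero_less_one less_max_iff_disj)
          then show ?thesis by (intro exI[of _ n]) simp
        qed
        show "\<exists>n. seq u n < 1 / (real k + 1)" for k
          using g unfolding good_def by (simp add: add_pos_pos)
      qed
    qed
    then show ?thesis unfolding Umeas_def by (intro AE_uniform_measureI) auto
  qed
  have AEdet: "AE b in B. det_strategy b"
  proof -
    have "AE b in B. Qp b" unfolding B_def
      using AE_distr_iff[OF seqm, of Qp] Qp_meas AEQ by (simp add: PS_def)
    then show ?thesis by (rule eventually_mono) (rule Qp_det)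
  qed
  have RS: "rand_strategy B" unfolding rand_strategy_def using PB sB AEdet by (simp add: PS_def)
  have cost: "rand_cost B T \<le> (\<integral>\<^sup>+u. indicator {0<..1} u * hc (\<lambda>n. G (real_of_int n + u)) T \<partial>lborel)" if T: "0 < T" for T
  proof -
    have hm: "(\<lambda>b. hc b T) \<in> borel_measurable PS" unfolding hc_def PS_def by measurable
    have hcm: "(\<lambda>u. hc (seq u) T) \<in> borel_measurable lborel" unfolding hc_def seq_def by measurable
    have "rand_cost B T \<le> (\<integral>\<^sup>+b. hc b T \<partial>B)" unfolding rand_cost_def
      using AEdet by (intro nn_integral_mono_AE) (auto elim!: eventually_mono simp: det_cost_eq[OF _ T])
    also have "\<dots> = (\<integral>\<^sup>+u. hc (seq u) T \<partial>Umeas)" unfolding B_def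
      by (rule nn_integral_distr[OF seqm]) (simp add: hm)
    also have "\<dots> = (\<integral>\<^sup>+u. indicator {0<..1} u * hc (seq u) T \<partial>lborel)" by (rule int_U[OF hcm])
    finally show ?thesis by (simp add: seq_def)
  qed
  have "robust rho B" unfolding robust_def
    using cost prof_rob[OF prof _ rpos] order_trans by blast
  moreover have "consistent chi B" unfolding consistent_def
    using cost[of 1] prof_con[OF prof] by simp
  ultimately show ?thesis using RS by blast
qed

theorem lemma3:
  fixes rho chi :: real
  assumes "1 < chi" and "chi < rho"
  shows "(\<exists>B. rand_strategy B \<and> robust rho B \<and> consistent chi B) \<longleftrightarrow>
         (\<exists>G. bidding_profile rho chi G)"
proof
  have rpos: "0 < rho" using assms by simp
  assume "\<exists>B. rand_strategy B \<and> robust rho B \<and> consistent chi B"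
  then obtain B where B: "rand_strategy B" "robust rho B" "consistent chi B" by blast
  have P: "prob_space B" and sB: "sets B = sets (Pi\<^sub>M UNIV (\<lambda>_. borel))" and AEd: "AE b in B. det_strategy b"
    using B(1) unfolding rand_strategy_def by auto
  have meas: "\<And>n. (\<lambda>b. b n) \<in> borel_measurable B"
    by (subst measurable_cong_sets[OF sB refl]) simp
  have AEg: "AE b in B. good b" using AEd by (rule eventually_mono) (rule det_good)
  have le: "(\<integral>\<^sup>+b. dc b T \<partial>B) \<le> rand_cost B T" if "0 < T" for T
    unfolding rand_cost_def using AEd
    by (intro nn_integral_mono_AE) (auto elim!: eventually_mono simp: det_cost_eq[OF _ that] dc_le_hc)
  have rob: "\<And>T. 0 < T \<Longrightarrow> (\<integral>\<^sup>+b. dc b T \<partial>B) \<le> ennreal (rho * T)"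
    using le B(2) unfolding robust_def using order_trans by blast
  have con: "(\<integral>\<^sup>+b. dc b 1 \<partial>B) \<le> ennreal chi"
    using le[of 1] B(3) unfolding consistent_def by simp
  from B_main[of B "\<lambda>b. b", OF P meas AEg rob con rpos]
  show "\<exists>G. bidding_profile rho chi G" by blast
next
  have rpos: "0 < rho" using assms by simp
  assume "\<exists>G. bidding_profile rho chi G"
  then obtain G where "bidding_profile rho chi G" by blast
  from W_profile[OF this rpos] obtain G' where G': "bidding_profile rho chi G'" "\<And>x y. x + 1 < y \<Longrightarrow> G' x < G' y"
    by blast
  show "\<exists>B. rand_strategy B \<and> robust rho B \<and> consistent chi B"
    by (rule strat_from[OF G' rpos])
qed

end
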